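(* Let $\mathcal{T}$ be a tile set with consistent target frequencies $\{\alpha_T\}_{T\in\mathcal{T}}$, and let $p^*=p^*_{\mathcal{T}}$ be the maximum entropy distribution. For an entry $(i,j)$ write $\mathcal{T}(i,j)=\{T\in\mathcal{T}:(i,j)\in\mathrm{area}(T)\}$. Then $p^*(D)=\prod_{i,j}p^*\big((i,j)=D(i,j)\big)$ for all $D\in\mathcal{D}$, and there exist real numbers $\lambda_T$ ($T\in\mathcal{T}$) such that for every entry $(i,j)$ either $p^*((i,j)=1)\in\{0,1\}$ or \[ p^*((i,j)=1)=\frac{\exp\big(\sum_{T\in\mathcal{T}(i,j)}\lambda_T\big)}{\exp\big(\sum_{T\in\mathcal{T}(i,j)}\lambda_T\big)+1}. \]
   Context: Fix $n,m\ge1$; $\mathcal{D}$ is the set of all $n\times m$ binary matrices. A tile is $T=(t(T),a(T))$ with nonempty $t(T)\subseteq\{1..n\}$, $a(T)\subseteq\{1..m\}$, $\mathrm{area}(T)=t(T)\times a(T)$; $\mathrm{fr}(T;D)=\frac1{|\mathrm{area}(T)|}\sum_{(i,j)\in\mathrm{area}(T)}D(i,j)$, $\mathrm{fr}(T;p)=\sum_D p(D)\mathrm{fr}(T;D)$, $p((i,j)=v)=\sum_{D:D(i,j)=v}p(D)$. Given a finite tile set $\mathcal{T}$ with target frequencies $\alpha_T\in[0,1]$, let $\mathcal{P}=\{p:\mathrm{fr}(T;p)=\alpha_T\ \forall T\in\mathcal{T}\}$; the frequencies are consistent if $\mathcal{P}\neq\emptyset$. The maximum entropy distribution $p^*_{\mathcal{T}}$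 is the (unique) element of $\mathcal{P}$ maximising $H(p)=-\sum_D p(D)\log p(D)$ (natural logarithm, $0\log0=0$). *)

theory Defs
  imports Complex_Main
begin

text \<open>A binary n x m matrix is a function on index pairs, False outside {1..n} x {1..m}.
  A tile is a pair (t, a) of row and column index sets.\<close>

type_synonym matrix = "nat \<times> nat \<Rightarrow> bool"
type_synonym tile = "nat set \<times> nat set"

definition matrices :: "nat \<Rightarrow> nat \<Rightarrow> matrix set" where
  "matrices n m = {D. \<forall>i j. D (i, j) \<longrightarrow> i \<in> {1..n} \<and> j \<in> {1..m}}"

definition valid_tile :: "nat \<Rightarrow> nat \<Rightarrow> tile \<Rightarrow> bool" where
  "valid_tile n m T \<longleftrightarrow> fst T \<noteq> {} \<and> fst T \<subseteq> {1..n} \<and> snd T \<noteq> {} \<and> snd T \<subseteq> {1..m}"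

definition area :: "tile \<Rightarrow> (nat \<times> nat) set" where
  "area T = fst T \<times> snd T"

definition fr_mat :: "tile \<Rightarrow> matrix \<Rightarrow> real" where
  "fr_mat T D = (\<Sum>x\<in>area T. of_bool (D x)) / real (card (area T))"

definition fr_dist :: "nat \<Rightarrow> nat \<Rightarrow> tile \<Rightarrow> (matrix \<Rightarrow> real) \<Rightarrow> real" where
  "fr_dist n m T p = (\<Sum>D\<in>matrices n m. p D * fr_mat T D)"

definition is_distr :: "nat \<Rightarrow> nat \<Rightarrow> (matrix \<Rightarrow> real) \<Rightarrow> bool" where
  "is_distr n m p \<longleftrightarrow> (\<forall>D\<in>matrices n m. 0 \<le> p D) \<and> (\<Sum>D\<in>matrices n m. p D) = 1"

definition marg :: "nat \<Rightarrow> nat \<Rightarrow> (matrix \<Rightarrow> real) \<Rightarrow> nat \<times> nat \<Rightarrow> bool \<Rightarrow> real" where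
  "marg n m p ij v = (\<Sum>D\<in>{D\<in>matrices n m. D ij = v}. p D)"

text \<open>Natural-log entropy; note ln 0 = 0 in Isabelle, so 0 * ln 0 = 0.\<close>
definition entropy :: "nat \<Rightarrow> nat \<Rightarrow> (matrix \<Rightarrow> real) \<Rightarrow> real" where
  "entropy n m p = - (\<Sum>D\<in>matrices n m. p D * ln (p D))"

definition dists_P :: "nat \<Rightarrow> nat \<Rightarrow> tile set \<Rightarrow> (tile \<Rightarrow> real) \<Rightarrow> (matrix \<Rightarrow> real) set" where
  "dists_P n m Ts \<alpha> = {p. is_distr n m p \<and> (\<forall>T\<in>Ts. fr_dist n m T p = \<alpha> T)}"

definition is_maxent :: "nat \<Rightarrow> nat \<Rightarrow> tile set \<Rightarrow> (tile \<Rightarrow> real) \<Rightarrow> (matrix \<Rightarrow> real) \<Rightarrow> bool" where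
  "is_maxent n m Ts \<alpha> p \<longleftrightarrow> p \<in> dists_P n m Ts \<alpha> \<and> (\<forall>q\<in>dists_P n m Ts \<alpha>. entropy n m q \<le> entropy n m p)"

end

theory Submission
  imports Defs
begin


definition MS :: "(nat\<times>nat) set \<Rightarrow> matrix set" where
  "MS G = {D. \<forall>x. D x \<longrightarrow> x \<in> G}"

definition Q :: "(nat\<times>nat) set \<Rightarrow> (nat\<times>nat \<Rightarrow> bool \<Rightarrow> real) \<Rightarrow> matrix \<Rightarrow> real" where
  "Q G f D = (\<Prod>x\<in>G. f x (D x))"

lemma MS_eq: "MS G = (\<lambda>S x. x \<in> S) ` Pow G"
proof
  show "MS G \<subseteq> (\<lambda>S x. x \<in> S) ` Pow G"
  proof
    fix D assume "D \<in> MS G"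
    then have "D = (\<lambda>x. x \<in> {y. D y})" "{y. D y} \<in> Pow G" by (auto simp: MS_def)
    then show "D \<in> (\<lambda>S x. x \<in> S) ` Pow G" by blast
  qed
qed (auto simp: MS_def)

lemma finite_MS: "finite G \<Longrightarrow> finite (MS G)"
  by (simp add: MS_eq)

lemma sum_Q: assumes "finite G"
  shows "(\<Sum>D\<in>MS G. Q G f D) = (\<Prod>x\<in>G. f x True + f x False)"
proof -
  have inj: "inj_on (\<lambda>S x. x \<in> S) (Pow G)"
    by (rule inj_onI) (metis Collect_mem_eq)
  have "(\<Sum>D\<in>MS G. Q G f D) = (\<Sum>S\<in>Pow G. Q G f (\<lambda>x. x \<in> S))"
    unfolding MS_eq by (simp add: sum.reindex[OF inj])
  also have "\<dots> = (\<Sum>S\<in>Pow G. (\<Prod>x\<in>S. f x True) * (\<Prod>x\<in>G-S. f x False))"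
  proof (rule sum.cong[OF refl])
    fix S assume S: "S \<in> Pow G"
    have "Q G f (\<lambda>x. x \<in> S) = (\<Prod>x\<in>S. f x (x\<in>S)) * (\<Prod>x\<in>G-S. f x (x \<in> S))"
      unfolding Q_def using S assms
      by (metis PowD finite_subset prod.subset_diff mult.commute)
    also have "\<dots> = (\<Prod>x\<in>S. f x True) * (\<Prod>x\<in>G-S. f x False)"
      by (intro arg_cong2[where f="(*)"] prod.cong) auto
    finally show "Q G f (\<lambda>x. x \<in> S) = (\<Prod>x\<in>S. f x True) * (\<Prod>x\<in>G-S. f x False)" .
  qed
  also have "\<dots> = (\<Prod>x\<in>G. f x True + f x False)"
    by (rule prod_add[symmetric, OF assms])
  finally show ?thesis .
qed

lemma marg_Q_aux:
  assumes "finite G" "a \<in> G" "\<forall>x\<in>G. f x True + f x False = 1"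
  shows "(\<Sum>D\<in>{D\<in>MS G. D a = v}. Q G f D) = f a v"
proof -
  define f' where "f' = (\<lambda>x w. if x = a \<and> w \<noteq> v then 0 else f x w)"
  have "\<And>D. Q G f' D = (if D a = v then Q G f D else 0)"
    unfolding Q_def f'_def using assms(1,2)
    by (auto intro!: prod.cong simp: prod_zero_iff)
  then have "(\<Sum>D\<in>{D\<in>MS G. D a = v}. Q G f D) = (\<Sum>D\<in>MS G. Q G f' D)"
    using finite_MS[OF assms(1)] by (simp add: sum.inter_filter)
  also have "\<dots> = (\<Prod>x\<in>G. f' x True + f' x False)" by (rule sum_Q[OF assms(1)])
  also have "\<dots> = (f' a True + f' a False) * (\<Prod>x\<in>G-{a}. f' x True + f' x False)"
    using assms(1,2) by (simp add: prod.remove)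
  also have "(\<Prod>x\<in>G-{a}. f' x True + f' x False) = 1"
    using assms(3) by (intro prod.neutral) (auto simp: f'_def)
  finally show ?thesis by (cases v) (auto simp: f'_def)
qed



lemma matrices_MS: "matrices n m = MS ({1..n}\<times>{1..m})"
  unfolding matrices_def MS_def by auto

lemma split_bool_sum: assumes "finite M"
  shows "(\<Sum>D\<in>M. h D (D x)) = (\<Sum>D\<in>{D\<in>M. D x}. h D True) + (\<Sum>D\<in>{D\<in>M. \<not> D x}. h D False)"
proof -
  have e: "M = {D\<in>M. D x} \<union> {D\<in>M. \<not> D x}" by auto
  have "(\<Sum>D\<in>M. h D (D x)) = (\<Sum>D\<in>{D\<in>M. D x} \<union> {D\<in>M. \<not> D x}. h D (D x))"
    using e by simp
  also have "\<dots> = (\<Sum>D\<in>{D\<in>M. D x}. h D (D x)) + (\<Sum>D\<in>{D\<in>M. \<not> D x}. h D (D x))"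
    using assms by (intro sum.union_disjoint) auto
  finally have "(\<Sum>D\<in>M. h D (D x)) = (\<Sum>D\<in>{D\<in>M. D x}. h D (D x)) + (\<Sum>D\<in>{D\<in>M. \<not> D x}. h D (D x))" .
  also have "\<dots> = (\<Sum>D\<in>{D\<in>M. D x}. h D True) + (\<Sum>D\<in>{D\<in>M. \<not> D x}. h D False)"
    by (intro arg_cong2[where f="(+)"] sum.cong) auto
  finally show ?thesis .
qed

lemma log_swap:
  assumes G: "finite G"
    and pos: "\<forall>D\<in>MS G. p D \<noteq> 0 \<longrightarrow> (\<forall>x\<in>G. f x (D x) > 0)"
  shows "(\<Sum>D\<in>MS G. p D * ln (Q G f D)) =
     (\<Sum>x\<in>G. (\<Sum>D\<in>{D\<in>MS G. D x}. p D) * ln (f x True) + (\<Sum>D\<in>{D\<in>MS G. \<not> D x}. p D) * ln (f x False))"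
proof -
  have fin: "finite (MS G)" using finite_MS[OF G] .
  have "(\<Sum>D\<in>MS G. p D * ln (Q G f D)) = (\<Sum>D\<in>MS G. \<Sum>x\<in>G. p D * ln (f x (D x)))"
  proof (rule sum.cong[OF refl])
    fix D assume D: "D \<in> MS G"
    show "p D * ln (Q G f D) = (\<Sum>x\<in>G. p D * ln (f x (D x)))"
    proof (cases "p D = 0")
      case False
      then have "\<forall>x\<in>G. f x (D x) > 0" using pos D by blast
      then have "ln (Q G f D) = (\<Sum>x\<in>G. ln (f x (D x)))"
        unfolding Q_def using G by (intro ln_prod) auto
      then show ?thesis by (simp add: sum_distrib_left)
    qed simp
  qed
  also have "\<dots> = (\<Sum>x\<in>G. \<Sum>D\<in>MS G. p D * ln (f x (D x)))" by (rule sum.swap)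
  also have "\<dots> = (\<Sum>x\<in>G. (\<Sum>D\<in>{D\<in>MS G. D x}. p D) * ln (f x True) + (\<Sum>D\<in>{D\<in>MS G. \<not> D x}. p D) * ln (f x False))"
  proof (rule sum.cong[OF refl])
    fix x
    show "(\<Sum>D\<in>MS G. p D * ln (f x (D x))) = (\<Sum>D\<in>{D\<in>MS G. D x}. p D) * ln (f x True) + (\<Sum>D\<in>{D\<in>MS G. \<not> D x}. p D) * ln (f x False)"
      using split_bool_sum[OF fin, of "\<lambda>D v. p D * ln (f x v)" x] by (simp add: sum_distrib_right)
  qed
  finally show ?thesis .
qed

lemma LA:
  fixes r :: "'t \<Rightarrow> 'a \<Rightarrow> real" and g :: "'a \<Rightarrow> real"
  assumes "finite S" "finite X"
    and "\<forall>d. (\<forall>T\<in>S. (\<Sum>a\<in>X. d a * r T a) = 0) \<longrightarrow> (\<Sum>a\<in>X. d a * g a) = 0"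
  shows "\<exists>c. \<forall>a\<in>X. g a = (\<Sum>T\<in>S. c T * r T a)"
  using assms(1,3)
proof (induction S arbitrary: g rule: finite_induct)
  case empty
  then have "(\<Sum>a\<in>X. g a * g a) = 0" using empty.prems[rule_format, of g] by simp
  then have "\<forall>a\<in>X. g a * g a = 0" using assms(2) by (subst (asm) sum_nonneg_eq_0_iff) auto
  then show ?case by auto
next
  case (insert s S)
  show ?case
  proof (cases "\<exists>d0. (\<forall>T\<in>S. (\<Sum>a\<in>X. d0 a * r T a) = 0) \<and> (\<Sum>a\<in>X. d0 a * r s a) \<noteq> 0")
    case False
    then have "\<forall>d. (\<forall>T\<in>S. (\<Sum>a\<in>X. d a * r T a) = 0) \<longrightarrow> (\<Sum>a\<in>X. d a * g a) = 0"
      using insert.prems by blast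
    from insert.IH[OF this] obtain c where c: "\<forall>a\<in>X. g a = (\<Sum>T\<in>S. c T * r T a)" by blast
    have "\<forall>a\<in>X. g a = (\<Sum>T\<in>insert s S. (c(s:=0)) T * r T a)"
    proof
      fix a assume "a \<in> X"
      moreover have "(\<Sum>T\<in>S. (c(s:=0)) T * r T a) = (\<Sum>T\<in>S. c T * r T a)"
        using insert.hyps by (intro sum.cong) auto
      ultimately show "g a = (\<Sum>T\<in>insert s S. (c(s:=0)) T * r T a)"
        using insert.hyps c by (simp add: sum.insert)
    qed
    then show ?thesis by blast
  next
    case True
    then obtain d1 where d1: "\<forall>T\<in>S. (\<Sum>a\<in>X. d1 a * r T a) = 0" "(\<Sum>a\<in>X. d1 a * r s a) \<noteq> 0" by blast
    define k where "k = (\<Sum>a\<in>X. d1 a * r s a)"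
    define d0 where "d0 = (\<lambda>a. d1 a / k)"
    have d0S: "\<forall>T\<in>S. (\<Sum>a\<in>X. d0 a * r T a) = 0"
      using d1(1) by (simp add: d0_def sum_divide_distrib[symmetric])
    have d0s: "(\<Sum>a\<in>X. d0 a * r s a) = 1"
      using d1(2) by (simp add: d0_def k_def sum_divide_distrib[symmetric])
    define lam where "lam = (\<Sum>a\<in>X. d0 a * g a)"
    define g' where "g' = (\<lambda>a. g a - lam * r s a)"
    have "\<forall>d. (\<forall>T\<in>S. (\<Sum>a\<in>X. d a * r T a) = 0) \<longrightarrow> (\<Sum>a\<in>X. d a * g' a) = 0"
    proof (intro allI impI)
      fix d assume dS: "\<forall>T\<in>S. (\<Sum>a\<in>X. d a * r T a) = 0"
      define t where "t = (\<Sum>a\<in>X. d a * r s a)"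
      define d' where "d' = (\<lambda>a. d a - t * d0 a)"
      have "\<forall>T\<in>insert s S. (\<Sum>a\<in>X. d' a * r T a) = 0"
      proof
        fix T assume "T \<in> insert s S"
        then consider "T = s" | "T \<in> S" by blast
        then show "(\<Sum>a\<in>X. d' a * r T a) = 0"
        proof cases
          case 1
          have "(\<Sum>a\<in>X. d' a * r T a) = (\<Sum>a\<in>X. d a * r T a) - t * (\<Sum>a\<in>X. d0 a * r T a)"
            unfolding d'_def by (simp add: algebra_simps sum_subtractf sum_distrib_left)
          then show ?thesis using d0s 1 by (simp add: t_def)
        next
          case 2
          have "(\<Sum>a\<in>X. d' a * r T a) = (\<Sum>a\<in>X. d a * r T a) - t * (\<Sum>a\<in>X. d0 a * r T a)"
            unfolding d'_def by (simp add: algebra_simps sum_subtractf sum_distrib_left)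
          then show ?thesis using dS d0S 2 by simp
        qed
      qed
      then have "(\<Sum>a\<in>X. d' a * g a) = 0" using insert.prems by blast
      then have "(\<Sum>a\<in>X. d a * g a) - t * lam = 0"
        unfolding d'_def lam_def by (simp add: algebra_simps sum_subtractf sum_distrib_left)
      then show "(\<Sum>a\<in>X. d a * g' a) = 0"
        unfolding g'_def t_def by (simp add: algebra_simps sum_subtractf sum_distrib_left sum_distrib_right)
    qed
    from insert.IH[OF this] obtain c where c: "\<forall>a\<in>X. g' a = (\<Sum>T\<in>S. c T * r T a)" by blast
    have "\<forall>a\<in>X. g a = (\<Sum>T\<in>insert s S. (c(s:=lam)) T * r T a)"
    proof
      fix a assume "a \<in> X"
      then have "g a = lam * r s a + (\<Sum>T\<in>S. c T * r T a)" using c unfolding g'_def by (metis diff_eq_eq add.commute)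
      moreover have "(\<Sum>T\<in>S. (c(s:=lam)) T * r T a) = (\<Sum>T\<in>S. c T * r T a)"
        using insert.hyps by (intro sum.cong) auto
      ultimately show "g a = (\<Sum>T\<in>insert s S. (c(s:=lam)) T * r T a)"
        using insert.hyps by (simp add: sum.insert)
    qed
    then show ?thesis by blast
  qed
qed



lemma fr_marg: "fr_dist n m T p = (\<Sum>x\<in>area T. marg n m p x True) / real (card (area T))"
proof -
  have fin: "finite (matrices n m)" by (simp add: matrices_MS finite_MS)
  have "fr_dist n m T p = (\<Sum>D\<in>matrices n m. \<Sum>x\<in>area T. p D * of_bool (D x)) / real (card (area T))"
    unfolding fr_dist_def fr_mat_def by (simp add: sum_divide_distrib sum_distrib_left)
  also have "\<dots> = (\<Sum>x\<in>area T. \<Sum>D\<in>matrices n m. p D * of_bool (D x)) / real (card (area T))"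
    by (subst sum.swap) simp
  also have "\<dots> = (\<Sum>x\<in>area T. marg n m p x True) / real (card (area T))"
    unfolding marg_def using fin by (simp add: sum.inter_filter[symmetric] of_bool_def if_distrib cong: if_cong)
  finally show ?thesis .
qed

definition qy :: "(nat\<times>nat) set \<Rightarrow> (nat\<times>nat \<Rightarrow> real) \<Rightarrow> matrix \<Rightarrow> real" where
  "qy G y = Q G (\<lambda>x v. if v then y x else 1 - y x)"

lemma qy_nonneg: "\<forall>x\<in>G. 0 \<le> y x \<and> y x \<le> 1 \<Longrightarrow> 0 \<le> qy G y D"
  unfolding qy_def Q_def by (intro prod_nonneg) auto

lemma qy_sum: "finite G \<Longrightarrow> (\<Sum>D\<in>MS G. qy G y D) = 1"
  unfolding qy_def by (simp add: sum_Q)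

lemma qy_marg: "finite G \<Longrightarrow> a \<in> G \<Longrightarrow> (\<Sum>D\<in>{D\<in>MS G. D a = v}. qy G y D) = (if v then y a else 1 - y a)"
  unfolding qy_def by (subst marg_Q_aux) auto

lemma qy_ent: assumes G: "finite G" and y: "\<forall>x\<in>G. 0 \<le> y x \<and> y x \<le> 1"
  shows "(\<Sum>D\<in>MS G. qy G y D * ln (qy G y D)) = (\<Sum>x\<in>G. y x * ln (y x) + (1 - y x) * ln (1 - y x))"
proof -
  have pos: "\<forall>D\<in>MS G. qy G y D \<noteq> 0 \<longrightarrow> (\<forall>x\<in>G. (\<lambda>x v. if v then y x else 1 - y x) x (D x) > 0)"
  proof (intro ballI impI)
    fix D x assume "D \<in> MS G" "qy G y D \<noteq> 0" "x \<in> G"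
    then have "(\<lambda>x v. if v then y x else 1 - y x) x (D x) \<noteq> 0"
      unfolding qy_def Q_def using G by (auto simp: prod_zero_iff)
    then show "(\<lambda>x v. if v then y x else 1 - y x) x (D x) > 0" using y \<open>x\<in>G\<close>
      by (cases "D x") (auto simp: less_le)
  qed
  have "(\<Sum>D\<in>MS G. qy G y D * ln (qy G y D)) = (\<Sum>D\<in>MS G. qy G y D * ln (Q G (\<lambda>x v. if v then y x else 1 - y x) D))"
    by (simp add: qy_def)
  also have "\<dots> = (\<Sum>x\<in>G. (\<Sum>D\<in>{D\<in>MS G. D x}. qy G y D) * ln (y x) + (\<Sum>D\<in>{D\<in>MS G. \<not> D x}. qy G y D) * ln (1 - y x))"
    by (subst log_swap[OF G pos]) simp
  also have "\<dots> = (\<Sum>x\<in>G. y x * ln (y x) + (1 - y x) * ln (1 - y x))"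
  proof (rule sum.cong[OF refl])
    fix x assume "x \<in> G"
    show "(\<Sum>D\<in>{D\<in>MS G. D x}. qy G y D) * ln (y x) + (\<Sum>D\<in>{D\<in>MS G. \<not> D x}. qy G y D) * ln (1 - y x) = y x * ln (y x) + (1 - y x) * ln (1 - y x)"
      using qy_marg[OF G \<open>x\<in>G\<close>, where v=True and y=y] qy_marg[OF G \<open>x\<in>G\<close>, where v=False and y=y] by simp
  qed
  finally show ?thesis .
qed



lemma deriv_h:
  fixes x d :: real
  assumes "0 < x" "x < 1"
  shows "((\<lambda>t. (x + t*d) * ln (x + t*d) + (1 - (x + t*d)) * ln (1 - (x + t*d))) has_real_derivative
           d * (ln x - ln (1 - x))) (at 0)"
proof -
  have "((\<lambda>t. (x + t*d) * ln (x + t*d) + (1 - (x + t*d)) * ln (1 - (x + t*d))) has_real_derivative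
     (d * ln (x + 0*d) + (x + 0*d) * (d / (x + 0*d)) + ((- d) * ln (1 - (x + 0*d)) + (1 - (x + 0*d)) * ((-d) / (1 - (x + 0*d)))))) (at 0)"
    using assms by (auto intro!: derivative_eq_intros)
  moreover have "d * ln (x + 0*d) + (x + 0*d) * (d / (x + 0*d)) + ((- d) * ln (1 - (x + 0*d)) + (1 - (x + 0*d)) * ((-d) / (1 - (x + 0*d)))) = d * (ln x - ln (1 - x))"
    using assms by (simp add: field_simps)
  ultimately show ?thesis by simp
qed

theorem theorem2:
  fixes n m :: nat and Ts :: "tile set" and \<alpha> :: "tile \<Rightarrow> real" and p :: "matrix \<Rightarrow> real"
  assumes "n \<ge> 1" and "m \<ge> 1"
    and "finite Ts" and "\<forall>T\<in>Ts. valid_tile n m T"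
    and "\<forall>T\<in>Ts. 0 \<le> \<alpha> T \<and> \<alpha> T \<le> 1"
    and "dists_P n m Ts \<alpha> \<noteq> {}"
    and "is_maxent n m Ts \<alpha> p"
  shows "(\<forall>D\<in>matrices n m. p D = (\<Prod>i\<in>{1..n}. \<Prod>j\<in>{1..m}. marg n m p (i, j) (D (i, j))))
    \<and> (\<exists>lam :: tile \<Rightarrow> real. \<forall>i\<in>{1..n}. \<forall>j\<in>{1..m}.
          marg n m p (i, j) True \<in> {0, 1} \<or>
          marg n m p (i, j) True =
            exp (\<Sum>T\<in>{T\<in>Ts. (i, j) \<in> area T}. lam T) /
            (exp (\<Sum>T\<in>{T\<in>Ts. (i, j) \<in> area T}. lam T) + 1))"
proof -
  define G where "G = {1..n}\<times>{1..m}"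
  have finG: "finite G" by (simp add: G_def)
  have M: "matrices n m = MS G" by (simp add: G_def matrices_MS)
  have finM: "finite (MS G)" using finite_MS[OF finG] .
  from assms(7) have pP: "p \<in> dists_P n m Ts \<alpha>"
    and pmax: "\<forall>q\<in>dists_P n m Ts \<alpha>. entropy n m q \<le> entropy n m p"
    by (auto simp: is_maxent_def)
  then have pnn: "\<forall>D\<in>MS G. 0 \<le> p D" and psum: "(\<Sum>D\<in>MS G. p D) = 1"
    and pfr: "\<forall>T\<in>Ts. fr_dist n m T p = \<alpha> T"
    by (auto simp: dists_P_def is_distr_def M)
  define x where "x = (\<lambda>a. marg n m p a True)"
  have mT: "marg n m p a True = (\<Sum>D\<in>{D\<in>MS G. D a}. p D)" for a
    by (simp add: marg_def M)
  have mF: "marg n m p a False = (\<Sum>D\<in>{D\<in>MS G. \<not> D a}. p D)" for a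
    by (simp add: marg_def M)
  have margF: "marg n m p a False = 1 - x a" for a
    using split_bool_sum[OF finM, of "\<lambda>D v. p D" a] psum by (simp add: x_def mT mF)
  have margQ: "marg n m p a v = (if v then x a else 1 - x a)" for a v
    using margF by (cases v) (auto simp: x_def)
  have x0: "0 \<le> x a" for a unfolding x_def mT using pnn by (auto intro!: sum_nonneg)
  have x1: "x a \<le> 1" for a
  proof -
    have "0 \<le> marg n m p a False" unfolding mF using pnn by (auto intro!: sum_nonneg)
    then show ?thesis using margF by simp
  qed
  have pleq: "p D \<le> marg n m p a (D a)" if "D \<in> MS G" for D a
  proof -
    have "p D \<le> (\<Sum>D'\<in>{D'\<in>MS G. D' a = D a}. p D')"
      using that finM pnn by (intro member_le_sum) auto
    then show ?thesis by (simp add: marg_def M)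
  qed
  define f where "f = (\<lambda>a v. if v then x a else 1 - x a)"
  define q where "q = qy G x"
  have qQ: "q = Q G f" by (simp add: q_def qy_def f_def)
  have x01: "\<forall>a\<in>G. 0 \<le> x a \<and> x a \<le> 1" using x0 x1 by auto
  have qmarg: "marg n m q a True = x a" if "a \<in> G" for a
    using qy_marg[OF finG that, where v=True and y=x] by (simp add: marg_def M q_def)
  have areaG: "area T \<subseteq> G" if "T \<in> Ts" for T
    using assms(4) that by (auto simp: valid_tile_def area_def G_def)
  have qfr: "fr_dist n m T q = \<alpha> T" if "T \<in> Ts" for T
  proof -
    have "fr_dist n m T q = fr_dist n m T p"
      unfolding fr_marg using areaG[OF that] qmarg by (intro arg_cong2[where f="(/)"] sum.cong) (auto simp: x_def)
    then show ?thesis using pfr that by simp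
  qed
  have qP: "q \<in> dists_P n m Ts \<alpha>"
    using qfr qy_nonneg[OF x01] qy_sum[OF finG]
    by (auto simp: dists_P_def is_distr_def M q_def)
  have entle: "entropy n m q \<le> entropy n m p" using pmax qP by blast
  define E where "E = (\<Sum>a\<in>G. x a * ln (x a) + (1 - x a) * ln (1 - x a))"
  have entq: "(\<Sum>D\<in>MS G. q D * ln (q D)) = E"
    unfolding q_def E_def by (rule qy_ent[OF finG x01])
  have qpos: "q D > 0" if "D \<in> MS G" "p D > 0" for D
  proof -
    have "\<forall>a\<in>G. f a (D a) > 0"
      using pleq[OF that(1)] that(2) margQ by (auto simp: f_def) (smt (verit))+
    then show ?thesis unfolding qQ Q_def by (intro prod_pos) auto
  qed
  have entpq: "(\<Sum>D\<in>MS G. p D * ln (q D)) = E"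
  proof -
    have pos: "\<forall>D\<in>MS G. p D \<noteq> 0 \<longrightarrow> (\<forall>a\<in>G. f a (D a) > 0)"
    proof (intro ballI impI)
      fix D a assume D: "D \<in> MS G" "p D \<noteq> 0" "a \<in> G"
      then have "p D > 0" using pnn by (simp add: less_le)
      then show "f a (D a) > 0" using pleq[OF D(1), of a] margQ by (auto simp: f_def)
    qed
    show ?thesis unfolding qQ log_swap[OF finG pos] E_def
      by (intro sum.cong refl) (simp add: f_def mT[symmetric] mF[symmetric] margF x_def)
  qed
  have pq: "\<forall>D\<in>MS G. p D = q D"
  proof -
    define e where "e = (\<lambda>D. q D - p D - p D * (ln (q D) - ln (p D)))"
    have e0: "0 \<le> e D" if D: "D \<in> MS G" for D
    proof (cases "p D = 0")
      case True
      then show ?thesis using qy_nonneg[OF x01] by (simp add: e_def q_def)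
    next
      case False
      then have pp: "p D > 0" using pnn D by (simp add: less_le)
      have qp: "q D > 0" using qpos[OF D pp] .
      have "ln (q D / p D) \<le> q D / p D - 1" using pp qp by (intro ln_le_minus_one) simp
      then have "p D * ln (q D / p D) \<le> p D * (q D / p D - 1)" using pp by (intro mult_left_mono) auto
      moreover have "p D * (q D / p D - 1) = q D - p D" using pp by (simp add: field_simps)
      moreover have "ln (q D / p D) = ln (q D) - ln (p D)" using pp qp by (simp add: ln_div)
      ultimately show ?thesis by (simp add: e_def)
    qed
    have "(\<Sum>D\<in>MS G. e D) = (\<Sum>D\<in>MS G. q D) - (\<Sum>D\<in>MS G. p D) - ((\<Sum>D\<in>MS G. p D * ln (q D)) - (\<Sum>D\<in>MS G. p D * ln (p D)))"
      unfolding e_def by (simp add: sum_subtractf right_diff_distrib)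
    also have "\<dots> = - (E - (\<Sum>D\<in>MS G. p D * ln (p D)))"
      using psum qy_sum[OF finG] entpq by (simp add: q_def)
    finally have sE: "(\<Sum>D\<in>MS G. e D) = - (E - (\<Sum>D\<in>MS G. p D * ln (p D)))" .
    have "- E \<le> - (\<Sum>D\<in>MS G. p D * ln (p D))"
      using entle entq by (simp add: entropy_def M)
    then have "(\<Sum>D\<in>MS G. e D) \<le> 0" using sE by simp
    moreover have "0 \<le> (\<Sum>D\<in>MS G. e D)" using e0 by (intro sum_nonneg) auto
    ultimately have "(\<Sum>D\<in>MS G. e D) = 0" by simp
    then have eq0: "\<forall>D\<in>MS G. e D = 0" using sum_nonneg_eq_0_iff[OF finM] e0 by blast
    show ?thesis
    proof
      fix D assume D: "D \<in> MS G"
      show "p D = q D"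
      proof (cases "p D = 0")
        case True
        have "e D = 0" using eq0 D by blast
        then show ?thesis using True by (simp add: e_def)
      next
        case False
        then have pp: "p D > 0" using pnn D by (simp add: less_le)
        have qp: "q D > 0" using qpos[OF D pp] .
        have l: "ln (q D / p D) = ln (q D) - ln (p D)" using pp qp by (simp add: ln_div)
        have "p D * (q D / p D - 1 - ln (q D / p D)) = e D"
          using pp unfolding l e_def by (simp add: field_simps)
        then have "ln (q D / p D) = q D / p D - 1" using eq0 D pp by simp
        then have "q D / p D = 1" using pp qp by (intro ln_eq_minus_one) auto
        then show ?thesis using pp by (simp add: field_simps)
      qed
    qed
  qed
  have part1: "\<forall>D\<in>matrices n m. p D = (\<Prod>i\<in>{1..n}. \<Prod>j\<in>{1..m}. marg n m p (i, j) (D (i, j)))"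
  proof
    fix D assume "D \<in> matrices n m"
    then have "p D = Q G f D" using pq M qQ by simp
    also have "\<dots> = (\<Prod>a\<in>G. marg n m p a (D a))" unfolding Q_def f_def margQ by simp
    also have "\<dots> = (\<Prod>i\<in>{1..n}. \<Prod>j\<in>{1..m}. marg n m p (i, j) (D (i, j)))"
      unfolding G_def by (simp add: prod.cartesian_product)
    finally show "p D = (\<Prod>i\<in>{1..n}. \<Prod>j\<in>{1..m}. marg n m p (i, j) (D (i, j)))" .
  qed
  have part2: "\<exists>lam :: tile \<Rightarrow> real. \<forall>i\<in>{1..n}. \<forall>j\<in>{1..m}.
          marg n m p (i, j) True \<in> {0, 1} \<or>
          marg n m p (i, j) True =
            exp (\<Sum>T\<in>{T\<in>Ts. (i, j) \<in> area T}. lam T) /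
            (exp (\<Sum>T\<in>{T\<in>Ts. (i, j) \<in> area T}. lam T) + 1)"
  proof -
    define I where "I = {a\<in>G. x a \<noteq> 0 \<and> x a \<noteq> 1}"
    have finI: "finite I" using finG by (simp add: I_def)
    have xI: "0 < x a" "x a < 1" if "a \<in> I" for a
      using that x0[of a] x1[of a] by (auto simp: I_def)
    have IG: "I \<subseteq> G" by (auto simp: I_def)
    define g where "g = (\<lambda>a. ln (x a) - ln (1 - x a))"
    define r where "r = (\<lambda>T a. of_bool (a \<in> area T) :: real)"
    have key: "\<forall>d. (\<forall>T\<in>Ts. (\<Sum>a\<in>I. d a * r T a) = 0) \<longrightarrow> (\<Sum>a\<in>I. d a * g a) = 0"
    proof (intro allI impI)
      fix d :: "nat\<times>nat \<Rightarrow> real" assume hd: "\<forall>T\<in>Ts. (\<Sum>a\<in>I. d a * r T a) = 0"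
      define \<delta> where "\<delta> = Min (insert 1 ((\<lambda>a. min (x a) (1 - x a) / (\<bar>d a\<bar> + 1)) ` I))"
      have \<delta>pos: "0 < \<delta>" unfolding \<delta>_def using finI xI by (auto simp: Min_gr_iff)
      have \<delta>le: "\<delta> \<le> min (x a) (1 - x a) / (\<bar>d a\<bar> + 1)" if "a \<in> I" for a
        unfolding \<delta>_def using finI that by (intro Min_le) auto
      define y where "y = (\<lambda>t a. if a \<in> I then x a + t * d a else x a)"
      have y01: "\<forall>a\<in>G. 0 \<le> y t a \<and> y t a \<le> 1" if t: "\<bar>t\<bar> < \<delta>" for t
      proof
        fix a assume "a \<in> G"
        show "0 \<le> y t a \<and> y t a \<le> 1"
        proof (cases "a \<in> I")
          case True
          have k: "0 < \<bar>d a\<bar> + 1" by simp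
          have "\<bar>t * d a\<bar> \<le> \<bar>t\<bar> * (\<bar>d a\<bar> + 1)" by (simp add: abs_mult mult_left_mono)
          also have "\<dots> \<le> \<delta> * (\<bar>d a\<bar> + 1)" using t by (intro mult_right_mono) auto
          also have "\<dots> \<le> min (x a) (1 - x a)" using \<delta>le[OF True] pos_le_divide_eq[OF k] by simp
          finally have "\<bar>t * d a\<bar> \<le> min (x a) (1 - x a)" .
          then have "- (t * d a) \<le> x a" "t * d a \<le> 1 - x a" by auto
          then show ?thesis using True by (simp add: y_def)
        next
          case False then show ?thesis using x0 x1 by (simp add: y_def)
        qed
      qed
      define F where "F = (\<lambda>t. \<Sum>a\<in>G. y t a * ln (y t a) + (1 - y t a) * ln (1 - y t a))"
      have y0: "y 0 = x" by (simp add: y_def fun_eq_iff)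
      have entp: "entropy n m p = - F 0"
      proof -
        have "entropy n m p = - (\<Sum>D\<in>MS G. q D * ln (q D))"
          unfolding entropy_def M using pq by simp
        then show ?thesis using entq by (simp add: F_def E_def y0)
      qed
      have Fle: "\<forall>t. \<bar>0 - t\<bar> < \<delta> \<longrightarrow> F 0 \<le> F t"
      proof (intro allI impI)
        fix t assume "\<bar>0 - t\<bar> < \<delta>"
        then have t: "\<bar>t\<bar> < \<delta>" by simp
        note yt = y01[OF t]
        define qt where "qt = qy G (y t)"
        have qtm: "marg n m qt a True = y t a" if "a \<in> G" for a
          using qy_marg[OF finG that, where v=True and y="y t"] by (simp add: marg_def M qt_def)
        have qtfr: "fr_dist n m T qt = \<alpha> T" if T: "T \<in> Ts" for T
        proof -
          have finA: "finite (area T)" using areaG[OF T] finG finite_subset by blast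
          have "(\<Sum>a\<in>area T. marg n m qt a True) = (\<Sum>a\<in>area T. y t a)"
            using areaG[OF T] qtm by (intro sum.cong) auto
          also have "\<dots> = (\<Sum>a\<in>area T. x a + (if a \<in> I then t * d a else 0))"
            by (intro sum.cong) (auto simp: y_def)
          also have "\<dots> = (\<Sum>a\<in>area T. x a) + (\<Sum>a\<in>area T \<inter> I. t * d a)"
            by (simp add: sum.distrib sum.inter_restrict[OF finA])
          also have "(\<Sum>a\<in>area T \<inter> I. t * d a) = t * (\<Sum>a\<in>I. d a * r T a)"
          proof -
            have "(\<Sum>a\<in>I. d a * r T a) = (\<Sum>a\<in>I \<inter> area T. d a)"
              by (simp add: r_def sum.inter_restrict[OF finI] of_bool_def if_distrib cong: if_cong)
            then show ?thesis by (simp add: sum_distrib_left Int_commute)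
          qed
          also have "\<dots> = 0" using hd T by simp
          finally have "(\<Sum>a\<in>area T. marg n m qt a True) = (\<Sum>a\<in>area T. marg n m p a True)"
            by (simp add: x_def)
          then have "fr_dist n m T qt = fr_dist n m T p" by (simp add: fr_marg)
          then show ?thesis using pfr T by simp
        qed
        have qtP: "qt \<in> dists_P n m Ts \<alpha>"
          using qtfr qy_nonneg[OF yt] qy_sum[OF finG]
          by (auto simp: dists_P_def is_distr_def M qt_def)
        have "entropy n m qt = - F t"
          unfolding entropy_def M qt_def F_def using qy_ent[OF finG yt] by simp
        then show "F 0 \<le> F t" using pmax qtP entp by fastforce
      qed
      have der: "(F has_real_derivative (\<Sum>a\<in>G. if a \<in> I then d a * g a else 0)) (at 0)"
        unfolding F_def
      proof (rule DERIV_sum)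
        fix a assume "a \<in> G"
        show "((\<lambda>t. y t a * ln (y t a) + (1 - y t a) * ln (1 - y t a)) has_real_derivative
               (if a \<in> I then d a * g a else 0)) (at 0)"
        proof (cases "a \<in> I")
          case True
          then show ?thesis using deriv_h[OF xI[OF True], of "d a"] by (simp add: y_def g_def)
        next
          case False
          then show ?thesis by (simp add: y_def)
        qed
      qed
      have "(\<Sum>a\<in>G. if a \<in> I then d a * g a else 0) = 0"
        using DERIV_local_min[OF der \<delta>pos Fle] .
      moreover have "(\<Sum>a\<in>G. if a \<in> I then d a * g a else 0) = (\<Sum>a\<in>I. d a * g a)"
        using sum.inter_restrict[OF finG, of "\<lambda>a. d a * g a" I] IG by (simp add: Int_absorb1)
      ultimately show "(\<Sum>a\<in>I. d a * g a) = 0" by simp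
    qed
    obtain c where c: "\<forall>a\<in>I. g a = (\<Sum>T\<in>Ts. c T * r T a)"
      using LA[OF assms(3) finI key] by blast
    show ?thesis
    proof (intro exI[of _ c] ballI)
      fix i j assume ij: "i \<in> {1..n}" "j \<in> {1..m}"
      show "marg n m p (i, j) True \<in> {0, 1} \<or>
          marg n m p (i, j) True =
            exp (\<Sum>T\<in>{T\<in>Ts. (i, j) \<in> area T}. c T) /
            (exp (\<Sum>T\<in>{T\<in>Ts. (i, j) \<in> area T}. c T) + 1)"
      proof (cases "(i, j) \<in> I")
        case False
        then have "x (i, j) \<in> {0, 1}" using ij by (auto simp: I_def G_def)
        then show ?thesis by (simp add: x_def)
      next
        case True
        have "(\<Sum>T\<in>{T\<in>Ts. (i, j) \<in> area T}. c T) = (\<Sum>T\<in>Ts. c T * r T (i, j))"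
          using assms(3) by (simp add: r_def sum.inter_filter[symmetric] of_bool_def if_distrib cong: if_cong)
        also have "\<dots> = g (i, j)" using c True by simp
        finally have s: "(\<Sum>T\<in>{T\<in>Ts. (i, j) \<in> area T}. c T) = g (i, j)" .
        have x0': "0 < x (i,j)" and x1': "x (i,j) < 1" using xI[OF True] by auto
        have e: "exp (g (i, j)) = x (i,j) / (1 - x (i,j))"
          using x0' x1' by (simp add: g_def exp_diff)
        have "x (i,j) = exp (g (i, j)) / (exp (g (i, j)) + 1)"
          unfolding e using x0' x1' by (simp add: field_simps)
        then show ?thesis unfolding s by (simp add: x_def)
      qed
    qed
  qed
  show ?thesis using part1 part2 by blast
qed

end
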